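(* Any averaging system (with weight threshold $\rho$) in which every $G_t$ has at most $m$ connected components can be interpreted as an $m$-twist system with the same $s$-energy. Specifically, at each time the blocks of the twist system are the index intervals of the agents spanned by the blocks of the embedded $G_t$, and the $s$-energy of the twist system equals that of the averaging system for all $s\in(0,1]$.
   Context: Averaging system: - $(G_t)_{t\ge0}$ are undirected graphs on $[n]$, each with self-loops at all vertices. - $P_t$ is row-stochastic with $(P_t)_{ij}>0$ iff $\{i,j\}$ is an edge of $G_t$, and all nonzero entries are $\ge\rho\in(0,1/2]$. - The dynamics is $x(t+1)=P_tx(t)$. - The blocks at time $t$ are the maximal intervals of the union of the closed intervals with endpoints $x_i(t),x_j(t)$ over edges $\{i,j\}$, $i\ne j$, of $G_t$. - The $s$-energy is $\sum_t\sum_{\text{blocks}}(\text{length})^s$. $m$-twist system (parameter $\rho$): at each time $t$, relabel the agents so that their positions satisfy $x_1\le\dots\le x_n$. A partition of $[n]$ into at most $m$ intervals of consecutive indices $[u_{t,l},v_{t,l}]$ (the blocks) is specified. The next positions, again sorted as $y_1\le\dots\le y_n$ (agents keep their ranks), are any positions satisfying, for every block $[u,v]$ and every $i\in[u,v]$, $$(1-\rho)x_u+\rho x_{\min\{i+1,v\}}\le y_i\le\rho x_{\max\{i-1,u\}}+(1-\rho)x_v.$$ The $s$-energy of a twist system is $\sum_{t\ge0}\sum_l\big(x_{v_{t,l}}(t)-x_{u_{t,l}}(t)\big)^s$. *)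

theory Defs
  imports "HOL-Analysis.Analysis"
begin

text \<open>Agents are 0..<n. E t i j : {i,j} is an edge of G_t. P t i j : entry of P_t.
  x t i : position of agent i at time t.\<close>

definition averaging_system ::
  "nat \<Rightarrow> real \<Rightarrow> (nat \<Rightarrow> nat \<Rightarrow> nat \<Rightarrow> bool) \<Rightarrow> (nat \<Rightarrow> nat \<Rightarrow> nat \<Rightarrow> real)
   \<Rightarrow> (nat \<Rightarrow> nat \<Rightarrow> real) \<Rightarrow> bool" where
  "averaging_system n \<rho> E P x \<longleftrightarrow>
     0 < \<rho> \<and> \<rho> \<le> 1/2 \<and>
     (\<forall>t. (\<forall>i<n. E t i i) \<and>
          (\<forall>i<n. \<forall>j<n. E t i j \<longrightarrow> E t j i) \<and>
          (\<forall>i<n. \<forall>j<n. 0 \<le> P t i j \<and> (0 < P t i j \<longleftrightarrow> E t i j) \<and>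
                        (0 < P t i j \<longrightarrow> \<rho> \<le> P t i j)) \<and>
          (\<forall>i<n. (\<Sum>j<n. P t i j) = 1) \<and>
          (\<forall>i<n. x (Suc t) i = (\<Sum>j<n. P t i j * x t j)))"

definition num_components :: "nat \<Rightarrow> (nat \<Rightarrow> nat \<Rightarrow> bool) \<Rightarrow> nat" where
  "num_components n G = card ({..<n} // ({(i,j). i < n \<and> j < n \<and> G i j}\<^sup>*))"

definition avg_union :: "nat \<Rightarrow> (nat \<Rightarrow> nat \<Rightarrow> bool) \<Rightarrow> (nat \<Rightarrow> real) \<Rightarrow> real set" where
  "avg_union n G y = (\<Union>{ {min (y i) (y j) .. max (y i) (y j)} | i j.
                          i < n \<and> j < n \<and> i \<noteq> j \<and> G i j})"

definition avg_blocks :: "nat \<Rightarrow> (nat \<Rightarrow> nat \<Rightarrow> bool) \<Rightarrow> (nat \<Rightarrow> real) \<Rightarrow> real set set" where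
  "avg_blocks n G y = {connected_component_set (avg_union n G y) p | p. p \<in> avg_union n G y}"

definition avg_energy ::
  "nat \<Rightarrow> (nat \<Rightarrow> nat \<Rightarrow> nat \<Rightarrow> bool) \<Rightarrow> (nat \<Rightarrow> nat \<Rightarrow> real) \<Rightarrow> real \<Rightarrow> ennreal" where
  "avg_energy n E x s = (\<Sum>t. ennreal (\<Sum>C\<in>avg_blocks n (E t) (x t). (Sup C - Inf C) powr s))"

text \<open>m-twist system: z t is the sorted position vector at time t (z t i = position of rank i),
  B t is the set of blocks, given as index intervals (u,v) meaning {u..v}.\<close>
definition twist_system ::
  "nat \<Rightarrow> real \<Rightarrow> nat \<Rightarrow> (nat \<Rightarrow> nat \<Rightarrow> real) \<Rightarrow> (nat \<Rightarrow> (nat \<times> nat) set) \<Rightarrow> bool" where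
  "twist_system n \<rho> m z B \<longleftrightarrow>
     (\<forall>t. (\<forall>i j. i \<le> j \<longrightarrow> j < n \<longrightarrow> z t i \<le> z t j) \<and>
          finite (B t) \<and> card (B t) \<le> m \<and>
          (\<forall>(u,v)\<in>B t. u \<le> v \<and> v < n) \<and>
          (\<forall>i<n. \<exists>!b\<in>B t. i \<in> {fst b..snd b}) \<and>
          (\<forall>(u,v)\<in>B t. \<forall>i\<in>{u..v}.
              (1-\<rho>) * z t u + \<rho> * z t (min (i+1) v) \<le> z (Suc t) i \<and>
              z (Suc t) i \<le> \<rho> * z t (max (i-1) u) + (1-\<rho>) * z t v))"

definition twist_energy ::
  "(nat \<Rightarrow> nat \<Rightarrow> real) \<Rightarrow> (nat \<Rightarrow> (nat \<times> nat) set) \<Rightarrow> real \<Rightarrow> ennreal" where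
  "twist_energy z B s = (\<Sum>t. ennreal (\<Sum>(u,v)\<in>B t. (z t v - z t u) powr s))"

definition span_interval :: "nat \<Rightarrow> (nat \<Rightarrow> real) \<Rightarrow> real set \<Rightarrow> nat \<times> nat" where
  "span_interval n w C = (Min {i. i < n \<and> w i \<in> C}, Max {i. i < n \<and> w i \<in> C})"

end

theory Submission
  imports Defs
begin


definition stp :: "nat \<Rightarrow> real \<Rightarrow> (nat \<Rightarrow> nat \<Rightarrow> bool) \<Rightarrow> (nat \<Rightarrow> nat \<Rightarrow> real) \<Rightarrow> (nat \<Rightarrow> real) \<Rightarrow> (nat \<Rightarrow> real) \<Rightarrow> bool" where
 "stp n \<rho> E P x x' \<longleftrightarrow> 0 < \<rho> \<and> \<rho> \<le> 1/2 \<and> (\<forall>i<n. E i i) \<and> (\<forall>i<n. \<forall>j<n. E i j \<longrightarrow> E j i) \<and>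
   (\<forall>i<n. \<forall>j<n. 0 \<le> P i j \<and> (0 < P i j \<longleftrightarrow> E i j) \<and> (0 < P i j \<longrightarrow> \<rho> \<le> P i j)) \<and>
   (\<forall>i<n. (\<Sum>j<n. P i j) = 1) \<and> (\<forall>i<n. x' i = (\<Sum>j<n. P i j * x j))"

lemma L1:
  assumes st: "stp n \<rho> E P x x'" and j: "j < n" and b: "b < n" "E j b"
    and nb: "\<forall>k<n. E j k \<longrightarrow> c \<le> x k"
  shows "\<rho> * x b + (1-\<rho>) * c \<le> x' j"
proof -
  have s1: "(\<Sum>k<n. P j k) = 1" and xj: "x' j = (\<Sum>k<n. P j k * x k)"
    and Pp: "\<forall>k<n. 0 \<le> P j k \<and> (0 < P j k \<longleftrightarrow> E j k) \<and> (0 < P j k \<longrightarrow> \<rho> \<le> P j k)"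
    using st j unfolding stp_def by auto
  have "x' j - c = (\<Sum>k<n. P j k * (x k - c))"
    using xj s1 by (simp add: right_diff_distrib sum_subtractf sum_distrib_right[symmetric])
  also have "\<dots> \<ge> P j b * (x b - c)"
  proof (rule member_le_sum)
    show "b \<in> {..<n}" using b by simp
    fix k assume "k \<in> {..<n} - {b}"
    then have k: "k < n" by simp
    show "0 \<le> P j k * (x k - c)"
    proof (cases "0 < P j k")
      case True then show ?thesis using Pp nb k by auto
    next
      case False then have "P j k = 0" using Pp k by force
      then show ?thesis by simp
    qed
  qed simp
  moreover have "P j b \<ge> \<rho>" "x b \<ge> c" using Pp b nb by auto
  moreover have "\<rho> > 0" using st unfolding stp_def by auto
  ultimately have "x' j - c \<ge> \<rho> * (x b - c)"
    by (smt (verit) mult_right_mono)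
  then show ?thesis by (simp add: algebra_simps)
qed

lemma L2:
  fixes x' :: "nat \<Rightarrow> real"
  assumes bs': "bij_betw \<sigma>' {..<n} {..<n}"
    and ws': "\<forall>i j. i \<le> j \<longrightarrow> j < n \<longrightarrow> x' (\<sigma>' i) \<le> x' (\<sigma>' j)"
    and i: "i < n" and cd: "card {j. j < n \<and> x' j < L} \<le> i"
  shows "L \<le> x' (\<sigma>' i)"
proof (rule ccontr)
  assume "\<not> L \<le> x' (\<sigma>' i)"
  then have "\<sigma>' ` {..i} \<subseteq> {j. j < n \<and> x' j < L}"
    using ws' i bs' by (force simp: bij_betw_def)
  then have "card (\<sigma>' ` {..i}) \<le> card {j. j < n \<and> x' j < L}"
    by (intro card_mono) auto
  moreover have "inj_on \<sigma>' {..i}" using bs' i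
    by (meson bij_betw_imp_inj_on inj_on_subset atMost_subset_iff lessThan_iff subsetI le_less_trans atMost_iff)
  then have "card (\<sigma>' ` {..i}) = Suc i" by (simp add: card_image)
  ultimately show False using cd by simp
qed

lemma lower:
  assumes st: "stp n \<rho> E P x x'"
    and bs: "bij_betw \<sigma> {..<n} {..<n}" and ws: "\<forall>i j. i \<le> j \<longrightarrow> j < n \<longrightarrow> x (\<sigma> i) \<le> x (\<sigma> j)"
    and bs': "bij_betw \<sigma>' {..<n} {..<n}" and ws': "\<forall>i j. i \<le> j \<longrightarrow> j < n \<longrightarrow> x' (\<sigma>' i) \<le> x' (\<sigma>' j)"
    and ui: "u \<le> i" and iv: "i \<le> v" and vn: "v < n"
    and cl: "\<forall>j<n. \<forall>k<n. j \<noteq> k \<longrightarrow> E j k \<longrightarrow> {min (x j) (x k)..max (x j) (x k)} \<inter> {x (\<sigma> u)..x (\<sigma> v)} \<noteq> {}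
              \<longrightarrow> {min (x j) (x k)..max (x j) (x k)} \<subseteq> {x (\<sigma> u)..x (\<sigma> v)}"
    and cov: "\<forall>p. x (\<sigma> u) < p \<longrightarrow> p < x (\<sigma> v) \<longrightarrow> (\<exists>j<n. \<exists>k<n. j \<noteq> k \<and> E j k \<and> min (x j) (x k) \<le> p \<and> p \<le> max (x j) (x k))"
  shows "(1-\<rho>) * x (\<sigma> u) + \<rho> * x (\<sigma> (min (i+1) v)) \<le> x' (\<sigma>' i)"
proof -
  define w where "w r = x (\<sigma> r)" for r
  define c where "c = min (i+1) v"
  define L where "L = (1-\<rho>) * w u + \<rho> * w c"
  have rho: "0 < \<rho>" "\<rho> \<le> 1/2" and Esym: "\<forall>i<n. \<forall>j<n. E i j \<longrightarrow> E j i" using st unfolding stp_def by auto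
  have wmono: "\<And>a b. a \<le> b \<Longrightarrow> b < n \<Longrightarrow> w a \<le> w b" using ws unfolding w_def by auto
  have cuv: "u \<le> c" "c \<le> v" "i \<le> c" unfolding c_def using ui iv by auto
  have lohi: "w u \<le> w c" "w c \<le> w v" using wmono cuv vn by auto
  have Lle: "L \<le> w v"
  proof -
    have "(1-\<rho>)*w u \<le> (1-\<rho>)*w v" using lohi rho by (intro mult_left_mono) auto
    moreover have "\<rho>*w c \<le> \<rho>*w v" using lohi rho by (intro mult_left_mono) auto
    ultimately show ?thesis unfolding L_def by (simp add: algebra_simps)
  qed
  have sig: "\<And>j. j < n \<Longrightarrow> \<exists>r<n. \<sigma> r = j" using bs unfolding bij_betw_def by (metis imageE lessThan_iff)
  have sig2: "\<And>r. r < n \<Longrightarrow> \<sigma> r < n" using bs unfolding bij_betw_def by auto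
  have nb_in: "\<forall>k<n. E j k \<longrightarrow> w u \<le> x k" if j: "j < n" "w u \<le> x j" "x j \<le> w v" for j
  proof (intro allI impI)
    fix k assume k: "k < n" "E j k"
    show "w u \<le> x k"
    proof (cases "j = k")
      case True then show ?thesis using j by simp
    next
      case False
      have "x j \<in> {min (x j) (x k)..max (x j) (x k)} \<inter> {x (\<sigma> u)..x (\<sigma> v)}" using j unfolding w_def by auto
      then have "{min (x j) (x k)..max (x j) (x k)} \<subseteq> {x (\<sigma> u)..x (\<sigma> v)}" using cl j k False by blast
      then have "x k \<in> {x (\<sigma> u)..x (\<sigma> v)}" by auto
      then show ?thesis unfolding w_def by auto
    qed
  qed
  have nb_out: "\<forall>k<n. E j k \<longrightarrow> w v < x k" if j: "j < n" "w v < x j" for j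
  proof (intro allI impI)
    fix k assume k: "k < n" "E j k"
    show "w v < x k"
    proof (rule ccontr)
      assume a: "\<not> w v < x k"
      then have jk: "j \<noteq> k" using j by auto
      have "w u \<le> w v" using wmono[OF _ vn] ui iv by auto
      then have "x (\<sigma> v) \<in> {min (x j) (x k)..max (x j) (x k)} \<inter> {x (\<sigma> u)..x (\<sigma> v)}" using j a unfolding w_def by auto
      then have "{min (x j) (x k)..max (x j) (x k)} \<subseteq> {x (\<sigma> u)..x (\<sigma> v)}" using cl j k jk by blast
      then have "x j \<in> {x (\<sigma> u)..x (\<sigma> v)}" by auto
      then show False using j unfolding w_def by auto
    qed
  qed
  have good: "L \<le> x' (\<sigma> r)" if r: "r < n" "w c \<le> w r" for r
  proof (cases "w r \<le> w v")
    case True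
    have "w u \<le> w r" using lohi r by auto
    then have "\<forall>k<n. E (\<sigma> r) k \<longrightarrow> w u \<le> x k" using nb_in[of "\<sigma> r"] True sig2 r unfolding w_def by auto
    moreover have "E (\<sigma> r) (\<sigma> r)" using st sig2 r unfolding stp_def by auto
    ultimately have "\<rho> * x (\<sigma> r) + (1-\<rho>) * w u \<le> x' (\<sigma> r)"
      using L1[OF st sig2[OF r(1)] sig2[OF r(1)]] by blast
    moreover have "\<rho> * w c \<le> \<rho> * w r" using r rho by simp
    ultimately show ?thesis unfolding L_def w_def by linarith
  next
    case False
    then have "\<forall>k<n. E (\<sigma> r) k \<longrightarrow> w v \<le> x k" using nb_out[of "\<sigma> r"] sig2 r unfolding w_def by force
    moreover have "E (\<sigma> r) (\<sigma> r)" using st sig2 r unfolding stp_def by auto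
    ultimately have "\<rho> * x (\<sigma> r) + (1-\<rho>) * w v \<le> x' (\<sigma> r)"
      using L1[OF st sig2[OF r(1)] sig2[OF r(1)]] by blast
    moreover have "\<rho> * w v \<le> \<rho> * w r" using False rho by simp
    moreover have "w v = \<rho> * w v + (1-\<rho>) * w v" by (simp add: algebra_simps)
    ultimately show ?thesis using Lle unfolding w_def by linarith
  qed
  have "card {j. j < n \<and> x' j < L} \<le> i"
  proof (cases "w c \<le> w i")
    case True
    have "{j. j < n \<and> x' j < L} \<subseteq> \<sigma> ` {..<i}"
    proof
      fix j assume "j \<in> {j. j < n \<and> x' j < L}"
      then have j: "j < n" "x' j < L" by auto
      obtain r where r: "r < n" "\<sigma> r = j" using sig[OF j(1)] by blast
      have "r < i"
      proof (rule ccontr)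
        assume "\<not> r < i"
        then have "w i \<le> w r" using wmono r by simp
        then have "L \<le> x' (\<sigma> r)" using good[of r] r True by simp
        then show False using j r by simp
      qed
      then show "j \<in> \<sigma> ` {..<i}" using r by auto
    qed
    then have "card {j. j < n \<and> x' j < L} \<le> card (\<sigma> ` {..<i})" by (intro card_mono) auto
    also have "\<dots> \<le> i" using card_image_le[of "{..<i}" \<sigma>] by simp
    finally show ?thesis .
  next
    case False
    have iv': "i < v"
    proof (rule ccontr)
      assume "\<not> i < v" then have "c = i" using iv unfolding c_def by simp
      then show False using False by simp
    qed
    then have ci: "c = i + 1" "i < v" unfolding c_def by auto
    have wi: "w u \<le> w i" "w i < w (i+1)" "w (i+1) \<le> w v" using False ci wmono vn ui by auto
    define p where "p = (w i + w (i+1)) / 2"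
    have p: "w u < p" "p < w v" "w i < p" "p < w (i+1)" using wi unfolding p_def by auto
    obtain a b where ab: "a < n" "b < n" "a \<noteq> b" "E a b" "x a \<le> p" "p \<le> x b"
    proof -
      obtain j k where jk: "j<n" "k<n" "j \<noteq> k" "E j k" "min (x j) (x k) \<le> p" "p \<le> max (x j) (x k)"
        using cov p unfolding w_def by blast
      show ?thesis
      proof (cases "x j \<le> x k")
        case True then show ?thesis using that[of j k] jk by auto
      next
        case False then show ?thesis using that[of k j] jk Esym by auto
      qed
    qed
    obtain ra where ra: "ra < n" "\<sigma> ra = a" using sig ab by blast
    obtain rb where rb: "rb < n" "\<sigma> rb = b" using sig ab by blast
    have rai: "ra \<le> i"
    proof (rule ccontr)
      assume "\<not> ra \<le> i" then have "w (i+1) \<le> w ra" using wmono ra by simp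
      then show False using p ab ra unfolding w_def by auto
    qed
    have rbi: "i + 1 \<le> rb"
    proof (rule ccontr)
      assume "\<not> i + 1 \<le> rb" then have "w rb \<le> w i" using wmono vn iv by simp
      then show False using p ab rb unfolding w_def by auto
    qed
    have xb: "w (i+1) \<le> x b" using wmono[OF rbi rb(1)] rb unfolding w_def by simp
    have "p \<in> {min (x a) (x b)..max (x a) (x b)} \<inter> {x (\<sigma> u)..x (\<sigma> v)}" using ab p unfolding w_def by auto
    then have "{min (x a) (x b)..max (x a) (x b)} \<subseteq> {x (\<sigma> u)..x (\<sigma> v)}" using cl ab by blast
    then have "w u \<le> x a" "x a \<le> w v" using ab unfolding w_def by auto
    then have "\<forall>k<n. E a k \<longrightarrow> w u \<le> x k" using nb_in ab by blast
    then have "\<rho> * x b + (1-\<rho>) * w u \<le> x' a" using L1[OF st ab(1) ab(2) ab(4)] by blast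
    moreover have "\<rho> * w (i+1) \<le> \<rho> * x b" using xb rho by simp
    ultimately have La: "L \<le> x' a" unfolding L_def ci by linarith
    have "{j. j < n \<and> x' j < L} \<subseteq> \<sigma> ` ({..i} - {ra})"
    proof
      fix j assume "j \<in> {j. j < n \<and> x' j < L}"
      then have j: "j < n" "x' j < L" by auto
      obtain r where r: "r < n" "\<sigma> r = j" using sig[OF j(1)] by blast
      have "r \<le> i"
      proof (rule ccontr)
        assume "\<not> r \<le> i"
        then have "w c \<le> w r" using wmono r ci by simp
        then have "L \<le> x' (\<sigma> r)" using good[of r] r by simp
        then show False using j r by simp
      qed
      moreover have "r \<noteq> ra" using La j r ra by auto
      ultimately show "j \<in> \<sigma> ` ({..i} - {ra})" using r by auto
    qed
    then have "card {j. j < n \<and> x' j < L} \<le> card (\<sigma> ` ({..i} - {ra}))" by (intro card_mono) auto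
    also have "\<dots> \<le> card ({..i} - {ra})" by (rule card_image_le) simp
    also have "\<dots> = i" using rai by simp
    finally show ?thesis .
  qed
  then have "L \<le> x' (\<sigma>' i)" using L2[OF bs' ws'] iv vn by simp
  then show ?thesis unfolding L_def w_def c_def .
qed

lemma bij_rev: "bij_betw (\<lambda>r. n - 1 - r) {..<n} {..<(n::nat)}"
proof (rule bij_betw_byWitness[where f'="\<lambda>r. n - 1 - r"]) qed auto

lemma stp_neg: "stp n \<rho> E P x x' \<Longrightarrow> stp n \<rho> E P (\<lambda>j. - x j) (\<lambda>j. - x' j)"
  unfolding stp_def by (simp add: sum_negf)

lemma upper:
  assumes st: "stp n \<rho> E P x x'"
    and bs: "bij_betw \<sigma> {..<n} {..<n}" and ws: "\<forall>i j. i \<le> j \<longrightarrow> j < n \<longrightarrow> x (\<sigma> i) \<le> x (\<sigma> j)"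
    and bs': "bij_betw \<sigma>' {..<n} {..<n}" and ws': "\<forall>i j. i \<le> j \<longrightarrow> j < n \<longrightarrow> x' (\<sigma>' i) \<le> x' (\<sigma>' j)"
    and ui: "u \<le> i" and iv: "i \<le> v" and vn: "v < n"
    and cl: "\<forall>j<n. \<forall>k<n. j \<noteq> k \<longrightarrow> E j k \<longrightarrow> {min (x j) (x k)..max (x j) (x k)} \<inter> {x (\<sigma> u)..x (\<sigma> v)} \<noteq> {}
              \<longrightarrow> {min (x j) (x k)..max (x j) (x k)} \<subseteq> {x (\<sigma> u)..x (\<sigma> v)}"
    and cov: "\<forall>p. x (\<sigma> u) < p \<longrightarrow> p < x (\<sigma> v) \<longrightarrow> (\<exists>j<n. \<exists>k<n. j \<noteq> k \<and> E j k \<and> min (x j) (x k) \<le> p \<and> p \<le> max (x j) (x k))"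
  shows "x' (\<sigma>' i) \<le> \<rho> * x (\<sigma> (max (i-1) u)) + (1-\<rho>) * x (\<sigma> v)"
proof -
  define y where "y j = - x j" for j
  define y' where "y' j = - x' j" for j
  define \<tau> where "\<tau> r = \<sigma> (n - 1 - r)" for r
  define \<tau>' where "\<tau>' r = \<sigma>' (n - 1 - r)" for r
  have st2: "stp n \<rho> E P y y'" using stp_neg[OF st] unfolding y_def y'_def .
  have bt: "bij_betw \<tau> {..<n} {..<n}" unfolding \<tau>_def
    using bij_betw_trans[OF bij_rev bs] by (simp add: comp_def)
  have bt': "bij_betw \<tau>' {..<n} {..<n}" unfolding \<tau>'_def
    using bij_betw_trans[OF bij_rev bs'] by (simp add: comp_def)
  have wt: "\<forall>i j. i \<le> j \<longrightarrow> j < n \<longrightarrow> y (\<tau> i) \<le> y (\<tau> j)" unfolding y_def \<tau>_def using ws by auto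
  have wt': "\<forall>i j. i \<le> j \<longrightarrow> j < n \<longrightarrow> y' (\<tau>' i) \<le> y' (\<tau>' j)" unfolding y'_def \<tau>'_def using ws' by auto
  have e1: "n - 1 - (n - 1 - v) = v" "n - 1 - (n - 1 - u) = u" "n - 1 - (n - 1 - i) = i" using ui iv vn by auto
  have tu: "\<tau> (n-1-v) = \<sigma> v" "\<tau> (n-1-u) = \<sigma> u" unfolding \<tau>_def using e1 by auto
  have cl2: "\<forall>j<n. \<forall>k<n. j \<noteq> k \<longrightarrow> E j k \<longrightarrow> {min (y j) (y k)..max (y j) (y k)} \<inter> {y (\<tau> (n-1-v))..y (\<tau> (n-1-u))} \<noteq> {}
              \<longrightarrow> {min (y j) (y k)..max (y j) (y k)} \<subseteq> {y (\<tau> (n-1-v))..y (\<tau> (n-1-u))}"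
  proof (intro allI impI)
    fix j k assume jk: "j < n" "k < n" "j \<noteq> k" "E j k"
      and ne: "{min (y j) (y k)..max (y j) (y k)} \<inter> {y (\<tau> (n-1-v))..y (\<tau> (n-1-u))} \<noteq> {}"
    have "{min (x j) (x k)..max (x j) (x k)} \<inter> {x (\<sigma> u)..x (\<sigma> v)} \<noteq> {}"
      using ne unfolding tu y_def by (auto simp: min_def max_def split: if_splits)
    then have sub: "{min (x j) (x k)..max (x j) (x k)} \<subseteq> {x (\<sigma> u)..x (\<sigma> v)}" using cl jk by blast
    show "{min (y j) (y k)..max (y j) (y k)} \<subseteq> {y (\<tau> (n-1-v))..y (\<tau> (n-1-u))}"
    proof
      fix t assume "t \<in> {min (y j) (y k)..max (y j) (y k)}"
      then have "-t \<in> {min (x j) (x k)..max (x j) (x k)}" unfolding y_def by (cases "x j \<le> x k") (auto simp: min_def max_def split: if_splits)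
      then have "-t \<in> {x (\<sigma> u)..x (\<sigma> v)}" using sub by blast
      then show "t \<in> {y (\<tau> (n-1-v))..y (\<tau> (n-1-u))}" unfolding tu y_def by auto
    qed
  qed
  have cov2: "\<forall>p. y (\<tau> (n-1-v)) < p \<longrightarrow> p < y (\<tau> (n-1-u)) \<longrightarrow> (\<exists>j<n. \<exists>k<n. j \<noteq> k \<and> E j k \<and> min (y j) (y k) \<le> p \<and> p \<le> max (y j) (y k))"
  proof (intro allI impI)
    fix p assume p: "y (\<tau> (n-1-v)) < p" "p < y (\<tau> (n-1-u))"
    then have "x (\<sigma> u) < -p" "-p < x (\<sigma> v)" unfolding tu y_def by auto
    then obtain j k where jk: "j<n" "k<n" "j \<noteq> k" "E j k" "min (x j) (x k) \<le> -p" "-p \<le> max (x j) (x k)"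
      using cov by blast
    then have "min (y j) (y k) \<le> p \<and> p \<le> max (y j) (y k)" unfolding y_def by (cases "x j \<le> x k") (auto simp: min_def max_def)
    then show "\<exists>j<n. \<exists>k<n. j \<noteq> k \<and> E j k \<and> min (y j) (y k) \<le> p \<and> p \<le> max (y j) (y k)"
      using jk by blast
  qed
  have "(1-\<rho>) * y (\<tau> (n-1-v)) + \<rho> * y (\<tau> (min ((n-1-i)+1) (n-1-u))) \<le> y' (\<tau>' (n-1-i))"
    by (rule lower[OF st2 bt wt bt' wt' _ _ _ cl2 cov2]) (use ui iv vn in auto)
  moreover have "n - 1 - min ((n-1-i)+1) (n-1-u) = max (i-1) u" using ui iv vn by auto
  ultimately show ?thesis unfolding y_def y'_def \<tau>_def \<tau>'_def e1 by (simp add: algebra_simps)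
qed




lemma U_mem: "p \<in> avg_union n G y \<longleftrightarrow> (\<exists>i<n. \<exists>j<n. i \<noteq> j \<and> G i j \<and> min (y i) (y j) \<le> p \<and> p \<le> max (y i) (y j))"
proof
  assume "p \<in> avg_union n G y"
  then obtain i j where "i < n" "j < n" "i \<noteq> j" "G i j" "p \<in> {min (y i) (y j) .. max (y i) (y j)}"
    unfolding avg_union_def by blast
  then show "\<exists>i<n. \<exists>j<n. i \<noteq> j \<and> G i j \<and> min (y i) (y j) \<le> p \<and> p \<le> max (y i) (y j)" by auto
next
  assume "\<exists>i<n. \<exists>j<n. i \<noteq> j \<and> G i j \<and> min (y i) (y j) \<le> p \<and> p \<le> max (y i) (y j)"
  then obtain i j where ij: "i < n" "j < n" "i \<noteq> j" "G i j" "p \<in> {min (y i) (y j) .. max (y i) (y j)}" by auto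
  then show "p \<in> avg_union n G y" unfolding avg_union_def by blast
qed

lemma U_cb: "closed (avg_union n G y) \<and> bounded (avg_union n G y)"
proof -
  let ?F = "{ {min (y i) (y j) .. max (y i) (y j)} | i j. i < n \<and> j < n \<and> i \<noteq> j \<and> G i j}"
  have "?F \<subseteq> (\<lambda>(i,j). {min (y i) (y j) .. max (y i) (y j)}) ` ({..<n} \<times> {..<n})" by auto
  then have fin: "finite ?F" by (rule finite_subset) auto
  have "closed (\<Union>?F)" using fin by (intro closed_Union) auto
  moreover have "bounded (\<Union>?F)" using fin by (intro bounded_Union) auto
  ultimately show ?thesis unfolding avg_union_def by simp
qed

lemma blk_form: "C \<in> avg_blocks n G y \<Longrightarrow> \<exists>p \<in> avg_union n G y. C = connected_component_set (avg_union n G y) p"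
  unfolding avg_blocks_def by auto

lemma blk_mk: "q \<in> avg_union n G y \<Longrightarrow> connected_component_set (avg_union n G y) q \<in> avg_blocks n G y \<and> q \<in> connected_component_set (avg_union n G y) q"
  unfolding avg_blocks_def by (auto simp: connected_component_refl)

lemma blk_sub: "C \<in> avg_blocks n G y \<Longrightarrow> C \<subseteq> avg_union n G y"
  using blk_form connected_component_subset by metis

lemma blk_eq: "C \<in> avg_blocks n G y \<Longrightarrow> q \<in> C \<Longrightarrow> C = connected_component_set (avg_union n G y) q"
  using blk_form connected_component_eq by metis

lemma blk_closure:
  assumes C: "C \<in> avg_blocks n G y" and ij: "i < n" "j < n" "i \<noteq> j" "G i j"
    and q: "q \<in> {min (y i) (y j)..max (y i) (y j)}" "q \<in> C"
  shows "{min (y i) (y j)..max (y i) (y j)} \<subseteq> C"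
proof -
  have "{min (y i) (y j)..max (y i) (y j)} \<subseteq> avg_union n G y"
  proof
    fix z assume "z \<in> {min (y i) (y j)..max (y i) (y j)}"
    then show "z \<in> avg_union n G y" unfolding U_mem using ij by auto
  qed
  then have "{min (y i) (y j)..max (y i) (y j)} \<subseteq> connected_component_set (avg_union n G y) q"
    using q by (intro connected_component_maximal) auto
  then show ?thesis using blk_eq[OF C q(2)] by simp
qed

lemma blk_interval:
  assumes C: "C \<in> avg_blocks n G y"
  shows "\<exists>a<n. \<exists>b<n. C = {y a..y b} \<and> y a \<le> y b"
proof -
  let ?U = "avg_union n G y"
  obtain p where p: "p \<in> ?U" "C = connected_component_set ?U p" using blk_form[OF C] by blast
  have ne: "C \<noteq> {}" using p(1) unfolding p(2) connected_component_eq_empty by simp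
  have Ucb: "closed ?U" "bounded ?U" using U_cb by auto
  have cl: "closed C" unfolding p(2) by (rule closed_connected_component[OF Ucb(1)])
  have bd: "bounded C" by (rule bounded_subset[OF Ucb(2) blk_sub[OF C]])
  have cn: "connected C" unfolding p(2) by (rule connected_connected_component)
  have bb: "bdd_below C" "bdd_above C" using bounded_imp_bdd_below[OF bd] bounded_imp_bdd_above[OF bd] by auto
  have lo: "Inf C \<in> C" by (rule closed_contains_Inf[OF ne bb(1) cl])
  have hi: "Sup C \<in> C" by (rule closed_contains_Sup[OF ne bb(2) cl])
  have Ceq: "C = {Inf C..Sup C}"
  proof
    show "C \<subseteq> {Inf C..Sup C}"
    proof
      fix z assume z: "z \<in> C"
      have "Inf C \<le> z" by (rule cInf_lower[OF z bb(1)])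
      moreover have "z \<le> Sup C" by (rule cSup_upper[OF z bb(2)])
      ultimately show "z \<in> {Inf C..Sup C}" by simp
    qed
    show "{Inf C..Sup C} \<subseteq> C"
    proof
      fix z assume z: "z \<in> {Inf C..Sup C}"
      have iv: "\<forall>x\<in>C. \<forall>y\<in>C. \<forall>z. x \<le> z \<longrightarrow> z \<le> y \<longrightarrow> z \<in> C" using cn unfolding connected_iff_interval .
      show "z \<in> C" by (rule iv[rule_format, OF lo hi]) (use z in auto)
    qed
  qed
  have "Inf C \<in> ?U" using lo blk_sub[OF C] by blast
  then obtain i j where ij: "i<n" "j<n" "i \<noteq> j" "G i j" "min (y i) (y j) \<le> Inf C" "Inf C \<le> max (y i) (y j)"
    unfolding U_mem by blast
  have "{min (y i) (y j)..max (y i) (y j)} \<subseteq> C" by (rule blk_closure[OF C ij(1-4) _ lo]) (use ij in simp)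
  then have "min (y i) (y j) \<in> C" using ij by auto
  then have "Inf C \<le> min (y i) (y j)" by (rule cInf_lower[OF _ bb(1)])
  then have "min (y i) (y j) = Inf C" using ij(5) by linarith
  then have "\<exists>a<n. y a = Inf C" using ij(1,2) by (cases "y i \<le> y j") (auto simp: min_def)
  then obtain a where a: "a < n" "y a = Inf C" by blast
  have "Sup C \<in> ?U" using hi blk_sub[OF C] by blast
  then obtain i j where ij: "i<n" "j<n" "i \<noteq> j" "G i j" "min (y i) (y j) \<le> Sup C" "Sup C \<le> max (y i) (y j)"
    unfolding U_mem by blast
  have "{min (y i) (y j)..max (y i) (y j)} \<subseteq> C" by (rule blk_closure[OF C ij(1-4) _ hi]) (use ij in simp)
  then have "max (y i) (y j) \<in> C" using ij by auto
  then have "max (y i) (y j) \<le> Sup C" by (rule cSup_upper[OF _ bb(2)])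
  then have "max (y i) (y j) = Sup C" using ij(6) by linarith
  then have "\<exists>b<n. y b = Sup C" using ij(1,2) by (cases "y i \<le> y j") (auto simp: max_def)
  then obtain b where b: "b < n" "y b = Sup C" by blast
  have "Inf C \<le> Sup C" by (rule cSup_upper[OF lo bb(2)])
  then have "y a \<le> y b" using a b by simp
  moreover have "C = {y a..y b}" using Ceq unfolding a(2)[symmetric] b(2)[symmetric] .
  ultimately show ?thesis using a(1) b(1) by blast
qed

lemma blocks_finite: "finite (avg_blocks n G y)"
proof -
  have "avg_blocks n G y \<subseteq> (\<lambda>a. connected_component_set (avg_union n G y) (y a)) ` {..<n}"
  proof
    fix C assume C: "C \<in> avg_blocks n G y"
    obtain a b where ab: "a<n" "b<n" "C = {y a..y b}" "y a \<le> y b" using blk_interval[OF C] by blast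
    have "y a \<in> C" using ab(3,4) by simp
    then have "C = connected_component_set (avg_union n G y) (y a)" by (rule blk_eq[OF C])
    moreover have "a \<in> {..<n}" using ab(1) by simp
    ultimately show "C \<in> (\<lambda>a. connected_component_set (avg_union n G y) (y a)) ` {..<n}" by (rule image_eqI)
  qed
  moreover have "finite ((\<lambda>a. connected_component_set (avg_union n G y) (y a)) ` {..<n})" by (rule finite_imageI) simp
  ultimately show ?thesis by (rule finite_subset)
qed

lemma path_lemma:
  assumes "(a,b) \<in> {(i,j). i < n \<and> j < n \<and> G i j}\<^sup>*"
  shows "a = b \<or> (y a \<in> avg_union n G y \<and> y b \<in> avg_union n G y \<and>
     connected_component_set (avg_union n G y) (y a) = connected_component_set (avg_union n G y) (y b))"
  using assms
proof (induction rule: rtrancl_induct)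
  case base then show ?case by simp
next
  case (step c b)
  let ?U = "avg_union n G y"
  show ?case
  proof (cases "c = b")
    case True then show ?thesis using step by simp
  next
    case False
    have cb: "c < n" "b < n" "G c b" using step by auto
    have sub: "{min (y c) (y b)..max (y c) (y b)} \<subseteq> ?U"
    proof
      fix z assume "z \<in> {min (y c) (y b)..max (y c) (y b)}"
      then show "z \<in> ?U" unfolding U_mem using cb False by auto
    qed
    have yc: "y c \<in> ?U" "y b \<in> ?U" using sub by auto
    have "{min (y c) (y b)..max (y c) (y b)} \<subseteq> ?U" by (rule sub)
    then have "{min (y c) (y b)..max (y c) (y b)} \<subseteq> connected_component_set ?U (y c)"
      by (intro connected_component_maximal) auto
    moreover have "y b \<in> {min (y c) (y b)..max (y c) (y b)}" by simp
    ultimately have "y b \<in> connected_component_set ?U (y c)" by (rule subsetD)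
    then have e: "connected_component_set ?U (y b) = connected_component_set ?U (y c)" by (rule connected_component_eq)
    show ?thesis using step.IH yc e by auto
  qed
qed

lemma span_lemma:
  fixes w :: "nat \<Rightarrow> real"
  assumes ws: "\<forall>i j. i \<le> j \<longrightarrow> j < n \<longrightarrow> w i \<le> w j"
    and r: "r1 < n" "r2 < n" "w r1 \<le> w r2"
  defines "I \<equiv> {i. i < n \<and> w i \<in> {w r1..w r2}}"
  shows "Min I \<le> Max I \<and> Max I < n \<and> w (Min I) = w r1 \<and> w (Max I) = w r2 \<and>
         (\<forall>i<n. w i \<in> {w r1..w r2} \<longleftrightarrow> Min I \<le> i \<and> i \<le> Max I)"
proof -
  have fin: "finite I" unfolding I_def by auto
  have r1I: "r1 \<in> I" "r2 \<in> I" using r unfolding I_def by auto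
  then have ne: "I \<noteq> {}" by blast
  have mn: "Min I \<in> I" "Max I \<in> I" using Min_in[OF fin ne] Max_in[OF fin ne] by auto
  have le1: "Min I \<le> r1" "r2 \<le> Max I" using Min_le[OF fin r1I(1)] Max_ge[OF fin r1I(2)] by auto
  have mnI: "Min I < n" "w (Min I) \<in> {w r1..w r2}" "Max I < n" "w (Max I) \<in> {w r1..w r2}" using mn unfolding I_def by auto
  have a1: "w (Min I) = w r1"
  proof -
    have "w (Min I) \<le> w r1" using ws le1 r by auto
    then show ?thesis using mnI by auto
  qed
  have a2: "w (Max I) = w r2"
  proof -
    have "w r2 \<le> w (Max I)" using ws le1 mnI by auto
    then show ?thesis using mnI by auto
  qed
  have a3: "\<forall>i<n. w i \<in> {w r1..w r2} \<longleftrightarrow> Min I \<le> i \<and> i \<le> Max I"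
  proof (intro allI impI iffI)
    fix i assume "i < n" "w i \<in> {w r1..w r2}"
    then have "i \<in> I" unfolding I_def by auto
    then show "Min I \<le> i \<and> i \<le> Max I" using Min_le[OF fin] Max_ge[OF fin] by auto
  next
    fix i assume i: "i < n" "Min I \<le> i \<and> i \<le> Max I"
    have "w (Min I) \<le> w i" "w i \<le> w (Max I)" using ws i mnI by auto
    then show "w i \<in> {w r1..w r2}" using a1 a2 by auto
  qed
  have "Min I \<le> Max I" using le1 r(3) ws r by (meson le_trans r1I Min_le Max_ge fin)
  then show ?thesis using a1 a2 a3 mnI(3) by blast
qed



lemma sort_perm:
  fixes f :: "nat \<Rightarrow> real"
  shows "\<exists>\<sigma>. bij_betw \<sigma> {..<n} {..<n} \<and> (\<forall>i j. i \<le> j \<longrightarrow> j < n \<longrightarrow> f (\<sigma> i) \<le> f (\<sigma> j))"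
proof -
  define xs where "xs = sort_key f [0..<n]"
  have len: "length xs = n" unfolding xs_def by simp
  have ds: "distinct xs" unfolding xs_def by simp
  have st: "set xs = {..<n}" unfolding xs_def by auto
  have bij: "bij_betw ((!) xs) {..<n} {..<n}" by (rule bij_betw_nth) (use len ds st in auto)
  have srt: "sorted (map f xs)" unfolding xs_def by simp
  have "\<forall>i j. i \<le> j \<longrightarrow> j < n \<longrightarrow> f (xs ! i) \<le> f (xs ! j)"
  proof (intro allI impI)
    fix i j assume ij: "i \<le> j" "j < n"
    have "map f xs ! i \<le> map f xs ! j" by (rule sorted_nth_mono[OF srt ij(1)]) (use ij len in simp)
    then show "f (xs ! i) \<le> f (xs ! j)" using ij len by simp
  qed
  then show ?thesis using bij by blast
qed

context
  fixes n :: nat and \<rho> :: real and E :: "nat \<Rightarrow> nat \<Rightarrow> bool" and P :: "nat \<Rightarrow> nat \<Rightarrow> real"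
    and y y' :: "nat \<Rightarrow> real" and \<sigma> \<sigma>' :: "nat \<Rightarrow> nat"
  assumes st: "stp n \<rho> E P y y'"
    and bs: "bij_betw \<sigma> {..<n} {..<n}" and ws: "\<forall>i j. i \<le> j \<longrightarrow> j < n \<longrightarrow> y (\<sigma> i) \<le> y (\<sigma> j)"
    and bs': "bij_betw \<sigma>' {..<n} {..<n}" and ws': "\<forall>i j. i \<le> j \<longrightarrow> j < n \<longrightarrow> y' (\<sigma>' i) \<le> y' (\<sigma>' j)"
begin

lemma surj_sig: "a < n \<Longrightarrow> \<exists>r<n. \<sigma> r = a"
  using bs unfolding bij_betw_def by (metis imageE lessThan_iff)

lemma blk_span:
  assumes C: "C \<in> avg_blocks n E y"
  shows "\<exists>u v. span_interval n (\<lambda>i. y (\<sigma> i)) C = (u,v) \<and> u \<le> v \<and> v < n \<and> C = {y (\<sigma> u)..y (\<sigma> v)} \<and>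
           (\<forall>i<n. y (\<sigma> i) \<in> C \<longleftrightarrow> u \<le> i \<and> i \<le> v)"
proof -
  obtain a b where ab: "a < n" "b < n" "C = {y a..y b}" "y a \<le> y b" using blk_interval[OF C] by blast
  obtain r1 where r1: "r1 < n" "\<sigma> r1 = a" using surj_sig ab by blast
  obtain r2 where r2: "r2 < n" "\<sigma> r2 = b" using surj_sig ab by blast
  have ws2: "\<forall>i j. i \<le> j \<longrightarrow> j < n \<longrightarrow> (\<lambda>i. y (\<sigma> i)) i \<le> (\<lambda>i. y (\<sigma> i)) j" using ws by simp
  have le: "(\<lambda>i. y (\<sigma> i)) r1 \<le> (\<lambda>i. y (\<sigma> i)) r2" using ab r1 r2 by simp
  note sp = span_lemma[OF ws2 r1(1) r2(1) le]
  have Ceq: "C = {y (\<sigma> r1)..y (\<sigma> r2)}" using ab(3) r1 r2 by simp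
  define I where "I = {i. i < n \<and> y (\<sigma> i) \<in> C}"
  have I: "I = {i. i < n \<and> (\<lambda>i. y (\<sigma> i)) i \<in> {(\<lambda>i. y (\<sigma> i)) r1..(\<lambda>i. y (\<sigma> i)) r2}}"
    unfolding I_def using Ceq by simp
  have spn: "span_interval n (\<lambda>i. y (\<sigma> i)) C = (Min I, Max I)" unfolding span_interval_def I_def by simp
  have p: "Min I \<le> Max I" "Max I < n" "y (\<sigma> (Min I)) = y (\<sigma> r1)" "y (\<sigma> (Max I)) = y (\<sigma> r2)"
    "\<forall>i<n. y (\<sigma> i) \<in> {y (\<sigma> r1)..y (\<sigma> r2)} \<longleftrightarrow> Min I \<le> i \<and> i \<le> Max I"
    using sp unfolding I[symmetric] by auto
  have "C = {y (\<sigma> (Min I))..y (\<sigma> (Max I))}" unfolding p(3) p(4) by (rule Ceq)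
  moreover have "\<forall>i<n. y (\<sigma> i) \<in> C \<longleftrightarrow> Min I \<le> i \<and> i \<le> Max I" using p(5) unfolding Ceq[symmetric] .
  ultimately show ?thesis using spn p(1,2) by blast
qed

definition Sng :: "nat set" where
  "Sng = {i. i < n \<and> (\<forall>C\<in>avg_blocks n E y. y (\<sigma> i) \<notin> C)}"

lemma Sng_U: "i \<in> Sng \<Longrightarrow> y (\<sigma> i) \<notin> avg_union n E y"
  unfolding Sng_def using blk_mk by blast

lemma twist_block:
  assumes uv: "u \<le> v" "v < n"
    and cl: "\<forall>j<n. \<forall>k<n. j \<noteq> k \<longrightarrow> E j k \<longrightarrow> {min (y j) (y k)..max (y j) (y k)} \<inter> {y (\<sigma> u)..y (\<sigma> v)} \<noteq> {}
              \<longrightarrow> {min (y j) (y k)..max (y j) (y k)} \<subseteq> {y (\<sigma> u)..y (\<sigma> v)}"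
    and cov: "\<forall>p. y (\<sigma> u) < p \<longrightarrow> p < y (\<sigma> v) \<longrightarrow> (\<exists>j<n. \<exists>k<n. j \<noteq> k \<and> E j k \<and> min (y j) (y k) \<le> p \<and> p \<le> max (y j) (y k))"
  shows "\<forall>i\<in>{u..v}. (1-\<rho>) * y (\<sigma> u) + \<rho> * y (\<sigma> (min (i+1) v)) \<le> y' (\<sigma>' i) \<and>
              y' (\<sigma>' i) \<le> \<rho> * y (\<sigma> (max (i-1) u)) + (1-\<rho>) * y (\<sigma> v)"
proof
  fix i assume i: "i \<in> {u..v}"
  show "(1-\<rho>) * y (\<sigma> u) + \<rho> * y (\<sigma> (min (i+1) v)) \<le> y' (\<sigma>' i) \<and>
              y' (\<sigma>' i) \<le> \<rho> * y (\<sigma> (max (i-1) u)) + (1-\<rho>) * y (\<sigma> v)"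
    using lower[OF st bs ws bs' ws' _ _ uv(2) cl cov] upper[OF st bs ws bs' ws' _ _ uv(2) cl cov] i by auto
qed

lemma twist_B:
  assumes b: "b \<in> span_interval n (\<lambda>i. y (\<sigma> i)) ` avg_blocks n E y \<union> (\<lambda>i. (i,i)) ` Sng"
  shows "fst b \<le> snd b \<and> snd b < n \<and> (\<forall>i\<in>{fst b..snd b}. (1-\<rho>) * y (\<sigma> (fst b)) + \<rho> * y (\<sigma> (min (i+1) (snd b))) \<le> y' (\<sigma>' i) \<and>
              y' (\<sigma>' i) \<le> \<rho> * y (\<sigma> (max (i-1) (fst b))) + (1-\<rho>) * y (\<sigma> (snd b)))"
  using b
proof
  assume "b \<in> span_interval n (\<lambda>i. y (\<sigma> i)) ` avg_blocks n E y"
  then obtain C where C: "C \<in> avg_blocks n E y" "b = span_interval n (\<lambda>i. y (\<sigma> i)) C" by blast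
  obtain u v where uv: "span_interval n (\<lambda>i. y (\<sigma> i)) C = (u,v)" "u \<le> v" "v < n" "C = {y (\<sigma> u)..y (\<sigma> v)}"
    using blk_span[OF C(1)] by blast
  have b2: "b = (u,v)" using C(2) uv(1) by simp
  have cl: "\<forall>j<n. \<forall>k<n. j \<noteq> k \<longrightarrow> E j k \<longrightarrow> {min (y j) (y k)..max (y j) (y k)} \<inter> {y (\<sigma> u)..y (\<sigma> v)} \<noteq> {}
              \<longrightarrow> {min (y j) (y k)..max (y j) (y k)} \<subseteq> {y (\<sigma> u)..y (\<sigma> v)}"
  proof (intro allI impI)
    fix j k assume jk: "j < n" "k < n" "j \<noteq> k" "E j k" and ne: "{min (y j) (y k)..max (y j) (y k)} \<inter> {y (\<sigma> u)..y (\<sigma> v)} \<noteq> {}"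
    then obtain q where q: "q \<in> {min (y j) (y k)..max (y j) (y k)}" "q \<in> C" unfolding uv(4) by blast
    show "{min (y j) (y k)..max (y j) (y k)} \<subseteq> {y (\<sigma> u)..y (\<sigma> v)}"
      using blk_closure[OF C(1) jk q] unfolding uv(4) .
  qed
  have cov: "\<forall>p. y (\<sigma> u) < p \<longrightarrow> p < y (\<sigma> v) \<longrightarrow> (\<exists>j<n. \<exists>k<n. j \<noteq> k \<and> E j k \<and> min (y j) (y k) \<le> p \<and> p \<le> max (y j) (y k))"
  proof (intro allI impI)
    fix p assume p: "y (\<sigma> u) < p" "p < y (\<sigma> v)"
    then have "p \<in> C" unfolding uv(4) by simp
    then have "p \<in> avg_union n E y" using blk_sub[OF C(1)] by blast
    then show "\<exists>j<n. \<exists>k<n. j \<noteq> k \<and> E j k \<and> min (y j) (y k) \<le> p \<and> p \<le> max (y j) (y k)" unfolding U_mem .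
  qed
  show ?thesis using twist_block[OF uv(2,3) cl cov] uv(2,3) unfolding b2 by simp
next
  assume "b \<in> (\<lambda>i. (i,i)) ` Sng"
  then obtain i where i: "i \<in> Sng" "b = (i,i)" by blast
  have inn: "i < n" using i unfolding Sng_def by simp
  have cl: "\<forall>j<n. \<forall>k<n. j \<noteq> k \<longrightarrow> E j k \<longrightarrow> {min (y j) (y k)..max (y j) (y k)} \<inter> {y (\<sigma> i)..y (\<sigma> i)} \<noteq> {}
              \<longrightarrow> {min (y j) (y k)..max (y j) (y k)} \<subseteq> {y (\<sigma> i)..y (\<sigma> i)}"
  proof (intro allI impI)
    fix j k assume jk: "j < n" "k < n" "j \<noteq> k" "E j k" and ne: "{min (y j) (y k)..max (y j) (y k)} \<inter> {y (\<sigma> i)..y (\<sigma> i)} \<noteq> {}"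
    then have "min (y j) (y k) \<le> y (\<sigma> i) \<and> y (\<sigma> i) \<le> max (y j) (y k)" by auto
    then have "y (\<sigma> i) \<in> avg_union n E y" unfolding U_mem using jk by blast
    then show "{min (y j) (y k)..max (y j) (y k)} \<subseteq> {y (\<sigma> i)..y (\<sigma> i)}" using Sng_U[OF i(1)] by blast
  qed
  have cov: "\<forall>p. y (\<sigma> i) < p \<longrightarrow> p < y (\<sigma> i) \<longrightarrow> (\<exists>j<n. \<exists>k<n. j \<noteq> k \<and> E j k \<and> min (y j) (y k) \<le> p \<and> p \<le> max (y j) (y k))"
    by auto
  show ?thesis using twist_block[OF _ inn cl cov] inn unfolding i(2) by simp
qed


lemma span_inj: "inj_on (span_interval n (\<lambda>i. y (\<sigma> i))) (avg_blocks n E y)"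
proof (rule inj_onI)
  fix C1 C2 assume C: "C1 \<in> avg_blocks n E y" "C2 \<in> avg_blocks n E y"
    and eq: "span_interval n (\<lambda>i. y (\<sigma> i)) C1 = span_interval n (\<lambda>i. y (\<sigma> i)) C2"
  obtain u v where uv: "span_interval n (\<lambda>i. y (\<sigma> i)) C1 = (u,v)" "u \<le> v" "v < n" "C1 = {y (\<sigma> u)..y (\<sigma> v)}"
    using blk_span[OF C(1)] by blast
  obtain u' v' where uv': "span_interval n (\<lambda>i. y (\<sigma> i)) C2 = (u',v')" "u' \<le> v'" "v' < n" "C2 = {y (\<sigma> u')..y (\<sigma> v')}"
    using blk_span[OF C(2)] by blast
  have "u = u'" "v = v'" using uv(1) uv'(1) eq by auto
  then show "C1 = C2" using uv(4) uv'(4) by simp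
qed

lemma disj_B: "span_interval n (\<lambda>i. y (\<sigma> i)) ` avg_blocks n E y \<inter> (\<lambda>i. (i,i)) ` Sng = {}"
proof (rule ccontr)
  assume "span_interval n (\<lambda>i. y (\<sigma> i)) ` avg_blocks n E y \<inter> (\<lambda>i. (i,i)) ` Sng \<noteq> {}"
  then obtain b where b: "b \<in> span_interval n (\<lambda>i. y (\<sigma> i)) ` avg_blocks n E y" "b \<in> (\<lambda>i. (i,i)) ` Sng" by blast
  obtain C where C1: "C \<in> avg_blocks n E y" "b = span_interval n (\<lambda>i. y (\<sigma> i)) C" using b(1) by blast
  obtain i where i1: "i \<in> Sng" "b = (i,i)" using b(2) by blast
  have C: "C \<in> avg_blocks n E y" "i \<in> Sng" "span_interval n (\<lambda>i. y (\<sigma> i)) C = (i,i)" using C1 i1 by auto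
  obtain u v where uv: "span_interval n (\<lambda>i. y (\<sigma> i)) C = (u,v)" "u \<le> v" "v < n" "C = {y (\<sigma> u)..y (\<sigma> v)}"
    using blk_span[OF C(1)] by blast
  have "u = i" "v = i" using uv(1) C(3) by auto
  then have "y (\<sigma> i) \<in> C" using uv(4) by simp
  then show False using C unfolding Sng_def by blast
qed

lemma part_B:
  assumes i: "i < n"
  shows "\<exists>!b\<in>span_interval n (\<lambda>i. y (\<sigma> i)) ` avg_blocks n E y \<union> (\<lambda>i. (i,i)) ` Sng. i \<in> {fst b..snd b}"
proof -
  let ?A = "span_interval n (\<lambda>i. y (\<sigma> i)) ` avg_blocks n E y"
  let ?S = "(\<lambda>i. (i,i)) ` Sng"
  have uniq: "b1 = b2" if b: "b1 \<in> ?A \<union> ?S" "b2 \<in> ?A \<union> ?S" "i \<in> {fst b1..snd b1}" "i \<in> {fst b2..snd b2}" for b1 b2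
  proof -
    have memC: "\<exists>C\<in>avg_blocks n E y. b = span_interval n (\<lambda>i. y (\<sigma> i)) C \<and> y (\<sigma> i) \<in> C" if hb: "b \<in> ?A" "i \<in> {fst b..snd b}" for b
    proof -
      obtain C where C: "C \<in> avg_blocks n E y" "b = span_interval n (\<lambda>i. y (\<sigma> i)) C" using hb(1) by blast
      obtain u v where uv: "span_interval n (\<lambda>i. y (\<sigma> i)) C = (u,v)" "u \<le> v" "v < n" "\<forall>i<n. y (\<sigma> i) \<in> C \<longleftrightarrow> u \<le> i \<and> i \<le> v"
        using blk_span[OF C(1)] by blast
      have "b = (u,v)" using uv(1) C(2) by simp
      then have "u \<le> i \<and> i \<le> v" using hb(2) by simp
      then have "y (\<sigma> i) \<in> C" using uv(4) i by blast
      then show ?thesis using C by blast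
    qed
    have memS: "b = (i,i) \<and> i \<in> Sng" if hs: "b \<in> ?S" "i \<in> {fst b..snd b}" for b
    proof -
      obtain k where k: "k \<in> Sng" "b = (k,k)" using hs(1) by blast
      then have "k = i" using hs(2) by simp
      then show ?thesis using k by simp
    qed
    show ?thesis
    proof (cases "b1 \<in> ?A")
      case A1: True
      obtain C1 where C1: "C1 \<in> avg_blocks n E y" "b1 = span_interval n (\<lambda>i. y (\<sigma> i)) C1" "y (\<sigma> i) \<in> C1" using memC[OF A1 b(3)] by blast
      show ?thesis
      proof (cases "b2 \<in> ?A")
        case True
        obtain C2 where C2: "C2 \<in> avg_blocks n E y" "b2 = span_interval n (\<lambda>i. y (\<sigma> i)) C2" "y (\<sigma> i) \<in> C2" using memC[OF True b(4)] by blast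
        have "C1 = C2" using blk_eq[OF C1(1) C1(3)] blk_eq[OF C2(1) C2(3)] by (rule trans[OF _ sym])
        then show ?thesis using C1(2) C2(2) by simp
      next
        case False
        then have "i \<in> Sng" using memS b by blast
        then show ?thesis using C1 unfolding Sng_def by blast
      qed
    next
      case False
      then have s1: "b1 = (i,i)" "i \<in> Sng" using memS b by blast+
      show ?thesis
      proof (cases "b2 \<in> ?A")
        case True
        obtain C2 where C2: "C2 \<in> avg_blocks n E y" "y (\<sigma> i) \<in> C2" using memC[OF True b(4)] by blast
        then show ?thesis using s1 unfolding Sng_def by blast
      next
        case False
        then show ?thesis using s1 memS b by blast
      qed
    qed
  qed
  have ex: "\<exists>b\<in>?A \<union> ?S. i \<in> {fst b..snd b}"
  proof (cases "i \<in> Sng")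
    case True then show ?thesis by force
  next
    case False
    then obtain C where C: "C \<in> avg_blocks n E y" "y (\<sigma> i) \<in> C" using i unfolding Sng_def by blast
    obtain u v where uv: "span_interval n (\<lambda>i. y (\<sigma> i)) C = (u,v)" "u \<le> v" "v < n" "\<forall>i<n. y (\<sigma> i) \<in> C \<longleftrightarrow> u \<le> i \<and> i \<le> v"
      using blk_span[OF C(1)] by blast
    have "(u,v) \<in> ?A" using C(1) uv(1) by (metis imageI)
    moreover have "i \<in> {fst (u,v)..snd (u,v)}" using uv(4) C(2) i by auto
    ultimately show ?thesis by blast
  qed
  show ?thesis using ex uniq by blast
qed

lemma fin_Sng: "finite Sng" unfolding Sng_def by auto

lemma card_bound: "card (avg_blocks n E y) + card Sng \<le> num_components n E"
proof -
  let ?R = "{(i,j). i < n \<and> j < n \<and> E i j}"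
  let ?Q = "{..<n} // ?R\<^sup>*"
  define ag where "ag C = (SOME a. a < n \<and> y a \<in> C)" for C
  have ag: "ag C < n \<and> y (ag C) \<in> C" if C: "C \<in> avg_blocks n E y" for C
  proof -
    obtain a b where ab: "a < n" "b < n" "C = {y a..y b}" "y a \<le> y b" using blk_interval[OF C] by blast
    have "a < n \<and> y a \<in> C" using ab by simp
    then show ?thesis unfolding ag_def by (rule someI)
  qed
  define h where "h p = (case p of Inl C \<Rightarrow> ?R\<^sup>* `` {ag C} | Inr i \<Rightarrow> ?R\<^sup>* `` {\<sigma> i})" for p
  have finQ: "finite ?Q" unfolding quotient_def by auto
  have sig_n: "\<sigma> i < n" if "i < n" for i using bs that unfolding bij_betw_def by auto
  have hQ: "h ` (avg_blocks n E y <+> Sng) \<subseteq> ?Q"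
  proof
    fix q assume "q \<in> h ` (avg_blocks n E y <+> Sng)"
    then obtain p where p: "p \<in> avg_blocks n E y <+> Sng" "q = h p" by blast
    show "q \<in> ?Q"
    proof (cases p)
      case (Inl C) then have "C \<in> avg_blocks n E y" using p by auto
      then have "ag C \<in> {..<n}" using ag by auto
      then show ?thesis using p Inl unfolding h_def by (auto intro: quotientI)
    next
      case (Inr i) then have "i \<in> Sng" using p by auto
      then have "\<sigma> i \<in> {..<n}" using sig_n unfolding Sng_def by auto
      then show ?thesis using p Inr unfolding h_def by (auto intro: quotientI)
    qed
  qed
  have path: "(a, b) \<in> ?R\<^sup>*" if "?R\<^sup>* `` {a} = ?R\<^sup>* `` {b}" for a b
  proof -
    have "b \<in> ?R\<^sup>* `` {a}" unfolding that by simp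
    then show ?thesis by simp
  qed
  have PL: "a = b \<or> (y a \<in> avg_union n E y \<and> y b \<in> avg_union n E y \<and>
     connected_component_set (avg_union n E y) (y a) = connected_component_set (avg_union n E y) (y b))"
    if "?R\<^sup>* `` {a} = ?R\<^sup>* `` {b}" for a b
    by (rule path_lemma[OF path[OF that]])
  have inj: "inj_on h (avg_blocks n E y <+> Sng)"
  proof (rule inj_onI)
    fix p q assume p: "p \<in> avg_blocks n E y <+> Sng" and q: "q \<in> avg_blocks n E y <+> Sng" and hpq: "h p = h q"
    show "p = q"
    proof (cases p)
      case (Inl C1)
      then have C1: "C1 \<in> avg_blocks n E y" using p by auto
      note a1 = ag[OF C1]
      show ?thesis
      proof (cases q)
        case (Inl C2)
        then have C2: "C2 \<in> avg_blocks n E y" using q by auto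
        note a2 = ag[OF C2]
        have "?R\<^sup>* `` {ag C1} = ?R\<^sup>* `` {ag C2}" using hpq Inl \<open>p = Inl C1\<close> unfolding h_def by simp
        note pl = PL[OF this]
        have e1: "C1 = connected_component_set (avg_union n E y) (y (ag C1))" using blk_eq[OF C1] a1 by blast
        have e2: "C2 = connected_component_set (avg_union n E y) (y (ag C2))" using blk_eq[OF C2] a2 by blast
        have "C1 = C2"
        proof (cases "ag C1 = ag C2")
          case True
          then have "C2 = connected_component_set (avg_union n E y) (y (ag C1))" using e2 by simp
          then show ?thesis using e1 by simp
        next
          case False then show ?thesis using pl e1 e2 by simp
        qed
        then show ?thesis using Inl \<open>p = Inl C1\<close> by simp
      next
        case (Inr i)
        then have i: "i \<in> Sng" using q by auto
        have "?R\<^sup>* `` {ag C1} = ?R\<^sup>* `` {\<sigma> i}" using hpq Inr \<open>p = Inl C1\<close> unfolding h_def by simp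
        note pl = PL[OF this]
        have False
        proof (cases "ag C1 = \<sigma> i")
          case True then show False using a1 i unfolding Sng_def using C1 by auto
        next
          case False then show False using pl Sng_U[OF i] by blast
        qed
        then show ?thesis ..
      qed
    next
      case (Inr i1)
      then have i1: "i1 \<in> Sng" using p by auto
      show ?thesis
      proof (cases q)
        case (Inl C2)
        then have C2: "C2 \<in> avg_blocks n E y" using q by auto
        note a2 = ag[OF C2]
        have "?R\<^sup>* `` {\<sigma> i1} = ?R\<^sup>* `` {ag C2}" using hpq Inl \<open>p = Inr i1\<close> unfolding h_def by simp
        note pl = PL[OF this]
        have False
        proof (cases "\<sigma> i1 = ag C2")
          case True then show False using a2 i1 C2 unfolding Sng_def by auto
        next
          case False then show False using pl Sng_U[OF i1] by blast
        qed
        then show ?thesis ..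
      next
        case (Inr i2)
        then have i2: "i2 \<in> Sng" using q by auto
        have "?R\<^sup>* `` {\<sigma> i1} = ?R\<^sup>* `` {\<sigma> i2}" using hpq Inr \<open>p = Inr i1\<close> unfolding h_def by simp
        note pl = PL[OF this]
        have "\<sigma> i1 = \<sigma> i2" using pl Sng_U[OF i1] by blast
        moreover have "i1 < n" "i2 < n" using i1 i2 unfolding Sng_def by auto
        ultimately have "i1 = i2" using bs unfolding bij_betw_def inj_on_def by blast
        then show ?thesis using Inr \<open>p = Inr i1\<close> by simp
      qed
    qed
  qed
  have "card (avg_blocks n E y <+> Sng) \<le> card ?Q" by (rule card_inj_on_le[OF inj hQ finQ])
  moreover have "card (avg_blocks n E y <+> Sng) = card (avg_blocks n E y) + card Sng"
    by (rule card_Plus[OF blocks_finite fin_Sng])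
  ultimately show ?thesis unfolding num_components_def by simp
qed


lemma energy_t:
  "(\<Sum>(u,v)\<in>span_interval n (\<lambda>i. y (\<sigma> i)) ` avg_blocks n E y \<union> (\<lambda>i. (i,i)) ` Sng. (y (\<sigma> v) - y (\<sigma> u)) powr s)
   = (\<Sum>C\<in>avg_blocks n E y. (Sup C - Inf C) powr s)"
proof -
  let ?A = "span_interval n (\<lambda>i. y (\<sigma> i)) ` avg_blocks n E y"
  let ?S = "(\<lambda>i. (i,i)) ` Sng"
  let ?f = "\<lambda>(u,v). (y (\<sigma> v) - y (\<sigma> u)) powr s"
  have finA: "finite ?A" using blocks_finite by blast
  have finS: "finite ?S" using fin_Sng by blast
  have "sum ?f (?A \<union> ?S) = sum ?f ?A + sum ?f ?S" by (rule sum.union_disjoint[OF finA finS disj_B])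
  moreover have "sum ?f ?S = 0" by (rule sum.neutral) auto
  moreover have "sum ?f ?A = (\<Sum>C\<in>avg_blocks n E y. ?f (span_interval n (\<lambda>i. y (\<sigma> i)) C))"
    by (rule sum.reindex[OF span_inj, unfolded comp_def])
  moreover have "(\<Sum>C\<in>avg_blocks n E y. ?f (span_interval n (\<lambda>i. y (\<sigma> i)) C)) = (\<Sum>C\<in>avg_blocks n E y. (Sup C - Inf C) powr s)"
  proof (rule sum.cong[OF refl])
    fix C assume C: "C \<in> avg_blocks n E y"
    obtain u v where uv: "span_interval n (\<lambda>i. y (\<sigma> i)) C = (u,v)" "u \<le> v" "v < n" "C = {y (\<sigma> u)..y (\<sigma> v)}"
      using blk_span[OF C] by blast
    have le: "y (\<sigma> u) \<le> y (\<sigma> v)" using ws uv(2,3) by blast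
    have "Sup C = y (\<sigma> v)" "Inf C = y (\<sigma> u)" unfolding uv(4) using le by auto
    then show "?f (span_interval n (\<lambda>i. y (\<sigma> i)) C) = (Sup C - Inf C) powr s" unfolding uv(1) by simp
  qed
  ultimately show ?thesis by simp
qed

lemma per_t:
  assumes cm: "num_components n E \<le> m"
  defines "BB \<equiv> span_interval n (\<lambda>i. y (\<sigma> i)) ` avg_blocks n E y \<union> {(i, i) | i. i < n \<and> (\<forall>C\<in>avg_blocks n E y. y (\<sigma> i) \<notin> C)}"
  shows "finite BB \<and> card BB \<le> m \<and> (\<forall>(u,v)\<in>BB. u \<le> v \<and> v < n) \<and> (\<forall>i<n. \<exists>!b\<in>BB. i \<in> {fst b..snd b}) \<and>
    (\<forall>(u,v)\<in>BB. \<forall>i\<in>{u..v}. (1-\<rho>) * y (\<sigma> u) + \<rho> * y (\<sigma> (min (i+1) v)) \<le> y' (\<sigma>' i) \<and>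
              y' (\<sigma>' i) \<le> \<rho> * y (\<sigma> (max (i-1) u)) + (1-\<rho>) * y (\<sigma> v)) \<and>
    (\<forall>s. (\<Sum>(u,v)\<in>BB. (y (\<sigma> v) - y (\<sigma> u)) powr s) = (\<Sum>C\<in>avg_blocks n E y. (Sup C - Inf C) powr s))"
proof -
  have eqS: "{(i, i) | i. i < n \<and> (\<forall>C\<in>avg_blocks n E y. y (\<sigma> i) \<notin> C)} = (\<lambda>i. (i,i)) ` Sng"
    unfolding Sng_def by blast
  have BB: "BB = span_interval n (\<lambda>i. y (\<sigma> i)) ` avg_blocks n E y \<union> (\<lambda>i. (i,i)) ` Sng"
    unfolding BB_def eqS ..
  have fin: "finite BB" unfolding BB using blocks_finite fin_Sng by blast
  have "card BB \<le> card (span_interval n (\<lambda>i. y (\<sigma> i)) ` avg_blocks n E y) + card ((\<lambda>i. (i,i)) ` Sng)"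
    unfolding BB by (rule card_Un_le)
  also have "\<dots> \<le> card (avg_blocks n E y) + card Sng" by (intro add_mono card_image_le blocks_finite fin_Sng)
  also have "\<dots> \<le> m" using card_bound cm by linarith
  finally have cd: "card BB \<le> m" .
  have tw: "\<forall>(u,v)\<in>BB. u \<le> v \<and> v < n" "\<forall>(u,v)\<in>BB. \<forall>i\<in>{u..v}. (1-\<rho>) * y (\<sigma> u) + \<rho> * y (\<sigma> (min (i+1) v)) \<le> y' (\<sigma>' i) \<and>
              y' (\<sigma>' i) \<le> \<rho> * y (\<sigma> (max (i-1) u)) + (1-\<rho>) * y (\<sigma> v)"
    using twist_B unfolding BB by fastforce+
  have pt: "\<forall>i<n. \<exists>!b\<in>BB. i \<in> {fst b..snd b}" unfolding BB using part_B by blast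
  have en: "\<forall>s. (\<Sum>(u,v)\<in>BB. (y (\<sigma> v) - y (\<sigma> u)) powr s) = (\<Sum>C\<in>avg_blocks n E y. (Sup C - Inf C) powr s)"
    unfolding BB using energy_t by blast
  show ?thesis using fin cd tw pt en by blast
qed

end



theorem lemma2:
  fixes n m :: nat and \<rho> :: real
    and E :: "nat \<Rightarrow> nat \<Rightarrow> nat \<Rightarrow> bool" and P :: "nat \<Rightarrow> nat \<Rightarrow> nat \<Rightarrow> real"
    and x :: "nat \<Rightarrow> nat \<Rightarrow> real"
  assumes "averaging_system n \<rho> E P x"
    and "\<forall>t. num_components n (E t) \<le> m"
  shows "\<exists>\<sigma> B.
     (\<forall>t. bij_betw (\<sigma> t) {..<n} {..<n}) \<and>
     twist_system n \<rho> m (\<lambda>t i. x t (\<sigma> t i)) B \<and>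
     (\<forall>t. B t = span_interval n (\<lambda>i. x t (\<sigma> t i)) ` avg_blocks n (E t) (x t)
              \<union> {(i, i) | i. i < n \<and> (\<forall>C\<in>avg_blocks n (E t) (x t). x t (\<sigma> t i) \<notin> C)}) \<and>
     (\<forall>s. 0 < s \<and> s \<le> 1 \<longrightarrow>
        twist_energy (\<lambda>t i. x t (\<sigma> t i)) B s = avg_energy n E x s)"
proof -
  have st: "stp n \<rho> (E t) (P t) (x t) (x (Suc t))" for t
    using assms(1) unfolding averaging_system_def stp_def by blast
  have "\<forall>t. \<exists>\<sigma>. bij_betw \<sigma> {..<n} {..<n} \<and> (\<forall>i j. i \<le> j \<longrightarrow> j < n \<longrightarrow> x t (\<sigma> i) \<le> x t (\<sigma> j))"
    using sort_perm by blast
  then obtain \<sigma> where \<sigma>: "\<forall>t. bij_betw (\<sigma> t) {..<n} {..<n} \<and> (\<forall>i j. i \<le> j \<longrightarrow> j < n \<longrightarrow> x t (\<sigma> t i) \<le> x t (\<sigma> t j))"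
    using choice[of "\<lambda>t \<sigma>. bij_betw \<sigma> {..<n} {..<n} \<and> (\<forall>i j. i \<le> j \<longrightarrow> j < n \<longrightarrow> x t (\<sigma> i) \<le> x t (\<sigma> j))"] by blast
  define B where "B t = span_interval n (\<lambda>i. x t (\<sigma> t i)) ` avg_blocks n (E t) (x t)
              \<union> {(i, i) | i. i < n \<and> (\<forall>C\<in>avg_blocks n (E t) (x t). x t (\<sigma> t i) \<notin> C)}" for t
  have bs: "bij_betw (\<sigma> t) {..<n} {..<n}" and ws: "\<forall>i j. i \<le> j \<longrightarrow> j < n \<longrightarrow> x t (\<sigma> t i) \<le> x t (\<sigma> t j)" for t
    using \<sigma> by auto
  have pt: "finite (B t) \<and> card (B t) \<le> m \<and> (\<forall>(u,v)\<in>B t. u \<le> v \<and> v < n) \<and> (\<forall>i<n. \<exists>!b\<in>B t. i \<in> {fst b..snd b}) \<and>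
    (\<forall>(u,v)\<in>B t. \<forall>i\<in>{u..v}. (1-\<rho>) * x t (\<sigma> t u) + \<rho> * x t (\<sigma> t (min (i+1) v)) \<le> x (Suc t) (\<sigma> (Suc t) i) \<and>
              x (Suc t) (\<sigma> (Suc t) i) \<le> \<rho> * x t (\<sigma> t (max (i-1) u)) + (1-\<rho>) * x t (\<sigma> t v)) \<and>
    (\<forall>s. (\<Sum>(u,v)\<in>B t. (x t (\<sigma> t v) - x t (\<sigma> t u)) powr s) = (\<Sum>C\<in>avg_blocks n (E t) (x t). (Sup C - Inf C) powr s))" for t
    unfolding B_def by (rule per_t[OF st bs ws bs ws]) (use assms(2) in blast)
  have tw: "twist_system n \<rho> m (\<lambda>t i. x t (\<sigma> t i)) B"
    unfolding twist_system_def using pt ws by simp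
  have en: "twist_energy (\<lambda>t i. x t (\<sigma> t i)) B s = avg_energy n E x s" for s
    unfolding twist_energy_def avg_energy_def using pt by simp
  show ?thesis using bs tw en B_def by blast
qed

end
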